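(* $C_{\mathbb N}=C^0_{\mathbb N}=3$.
   Context: $\mathbb N=\{1,2,3,\dots\}$ is regarded as the infinite path graph with edges $\{j,j+1\}$, $j\in\mathbb N$, and graph distance $d(i,j)=|i-j|$. A measure $\mu$ is a weight function $\mu:\mathbb N\to(0,\infty)$, with $\mu(A)=\sum_{v\in A}\mu(v)$. Closed balls are $B(x,r)=\{y:d(x,y)\le r\}$. The doubling constant of $\mu$ is $C_\mu=\sup\{\mu(B(x,2k+1))/\mu(B(x,k)): x\in \mathbb N,\ k\in\{0,1,2,\dots\}\}$, and $\mu$ is doubling if $C_\mu<\infty$. $C_{\mathbb N}=\inf\{C_\mu:\mu\text{ doubling}\}$; $C^0_\mu=\sup_{x}\mu(B(x,1))/\mu(x)$ and $C^0_{\mathbb N}=\inf_\mu C^0_\mu$, the infimum over doubling measures. *)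

theory Defs
  imports Complex_Main "HOL-Library.Extended_Real"
begin

text \<open>The path graph on the vertex set {1,2,3,...} (a subset of nat), distance |i-j|.\<close>

definition ballN :: "nat \<Rightarrow> nat \<Rightarrow> nat set" where
  "ballN x r = {y. 1 \<le> y \<and> y \<le> x + r \<and> x \<le> y + r}"

text \<open>A measure: positive weights on the vertices {1,2,...} (the value at 0 is irrelevant).\<close>
definition is_measureN :: "(nat \<Rightarrow> real) \<Rightarrow> bool" where
  "is_measureN \<mu> = (\<forall>v\<ge>1. \<mu> v > 0)"

definition doubling_const :: "(nat \<Rightarrow> real) \<Rightarrow> ereal" where
  "doubling_const \<mu> =
     (SUP p \<in> {x. 1 \<le> x} \<times> (UNIV :: nat set).
        ereal (sum \<mu> (ballN (fst p) (2 * snd p + 1)) / sum \<mu> (ballN (fst p) (snd p))))"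

definition doublingN :: "(nat \<Rightarrow> real) \<Rightarrow> bool" where
  "doublingN \<mu> = (is_measureN \<mu> \<and> doubling_const \<mu> < \<infinity>)"

definition C_N :: ereal where
  "C_N = (INF \<mu> \<in> {\<mu>. doublingN \<mu>}. doubling_const \<mu>)"

definition C0 :: "(nat \<Rightarrow> real) \<Rightarrow> ereal" where
  "C0 \<mu> = (SUP x \<in> {x. 1 \<le> x}. ereal (sum \<mu> (ballN x 1) / \<mu> x))"

definition C0_N :: ereal where
  "C0_N = (INF \<mu> \<in> {\<mu>. doublingN \<mu>}. C0 \<mu>)"

end

theory Submission
  imports Defs
begin

lemma ballN_eq: "ballN x r = {max 1 (x - r) .. x + r}"
  unfolding ballN_def by auto

lemma card_ballN: "card (ballN x r) = x + r + 1 - max 1 (x - r)"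
  unfolding ballN_eq by simp

lemma ballN0: "1 \<le> x \<Longrightarrow> ballN x 0 = {x}"
  unfolding ballN_def by auto

lemma ballN1_1: "ballN 1 1 = {1, 2}"
  unfolding ballN_def by auto

lemma ballN1_Suc: "ballN (Suc (Suc n)) 1 = {Suc n, Suc (Suc n), Suc (Suc (Suc n))}"
  unfolding ballN_def by auto

lemma key:
  fixes \<mu> :: "nat \<Rightarrow> real"
  assumes m: "is_measureN \<mu>" and b: "\<forall>x\<ge>1. sum \<mu> (ballN x 1) / \<mu> x \<le> c" and c3: "c < 3"
  shows False
proof -
  have pos: "\<And>n. \<mu> (Suc n) > 0" using m unfolding is_measureN_def by auto
  define t where "t = c - 1"
  define d where "d = 2 - t"
  have d0: "d > 0" using c3 unfolding d_def t_def by simp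
  have h1: "\<mu> 2 \<le> t * \<mu> 1"
  proof -
    have "sum \<mu> (ballN 1 1) / \<mu> 1 \<le> c" using b by auto
    moreover have "sum \<mu> (ballN 1 1) = \<mu> 1 + \<mu> 2" unfolding ballN1_1 by simp
    ultimately have "(\<mu> 1 + \<mu> 2) / \<mu> 1 \<le> c" by simp
    hence "\<mu> 1 + \<mu> 2 \<le> c * \<mu> 1" using pos[of 0] by (simp add: divide_le_eq)
    thus ?thesis unfolding t_def by (simp add: algebra_simps)
  qed
  have h2: "\<mu> (Suc (Suc (Suc n))) \<le> t * \<mu> (Suc (Suc n)) - \<mu> (Suc n)" for n
  proof -
    have "sum \<mu> (ballN (Suc (Suc n)) 1) / \<mu> (Suc (Suc n)) \<le> c" using b by auto
    moreover have "sum \<mu> (ballN (Suc (Suc n)) 1) = \<mu> (Suc n) + \<mu> (Suc (Suc n)) + \<mu> (Suc (Suc (Suc n)))"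
      unfolding ballN1_Suc by simp
    ultimately have "(\<mu> (Suc n) + \<mu> (Suc (Suc n)) + \<mu> (Suc (Suc (Suc n)))) / \<mu> (Suc (Suc n)) \<le> c"
      by simp
    hence "\<mu> (Suc n) + \<mu> (Suc (Suc n)) + \<mu> (Suc (Suc (Suc n))) \<le> c * \<mu> (Suc (Suc n))"
      using pos[of "Suc n"] by (simp add: divide_le_eq)
    thus ?thesis unfolding t_def by (simp add: algebra_simps)
  qed
  have ind: "\<mu> (Suc (Suc m)) \<le> (t - real m * d) * \<mu> (Suc m)" for m
  proof (induction m)
    case 0
    then show ?case using h1 by (simp add: numeral_2_eq_2)
  next
    case (Suc m)
    define c' where "c' = t - real m * d"
    have a: "\<mu> (Suc (Suc m)) \<le> c' * \<mu> (Suc m)" using Suc c'_def by simp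
    have p1: "\<mu> (Suc m) > 0" and p2: "\<mu> (Suc (Suc m)) > 0" using pos by auto
    have cpos: "c' > 0"
    proof (rule ccontr)
      assume "\<not> c' > 0"
      hence "c' * \<mu> (Suc m) \<le> 0" using p1 by (simp add: mult_nonpos_nonneg)
      thus False using a p2 by simp
    qed
    have "(2 - c') * \<mu> (Suc (Suc m)) \<le> \<mu> (Suc m)"
    proof (cases "2 - c' \<le> 0")
      case True
      then show ?thesis using p1 p2 by (smt (verit) mult_nonpos_nonneg)
    next
      case False
      have "(2 - c') * \<mu> (Suc (Suc m)) \<le> (2 - c') * (c' * \<mu> (Suc m))"
        using a False by (intro mult_left_mono) auto
      also have "\<dots> = (c' * (2 - c')) * \<mu> (Suc m)" by simp
      also have "\<dots> \<le> 1 * \<mu> (Suc m)"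
      proof (rule mult_right_mono)
        have "0 \<le> (c' - 1)^2" by simp
        thus "c' * (2 - c') \<le> 1" by (simp add: power2_eq_square algebra_simps)
      qed (use p1 in simp)
      finally show ?thesis by simp
    qed
    hence "\<mu> (Suc (Suc (Suc m))) \<le> t * \<mu> (Suc (Suc m)) - (2 - c') * \<mu> (Suc (Suc m))"
      using h2[of m] by simp
    also have "\<dots> = (t - real (Suc m) * d) * \<mu> (Suc (Suc m))"
      unfolding c'_def d_def by (simp add: algebra_simps)
    finally show ?case .
  qed
  obtain n where n: "t < real n * d" using ex_less_of_nat_mult[OF d0] by auto
  have "\<mu> (Suc (Suc n)) \<le> (t - real n * d) * \<mu> (Suc n)" by (rule ind)
  also have "\<dots> \<le> 0" using n pos[of n] by (simp add: mult_nonpos_nonneg)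
  finally show False using pos[of "Suc n"] by simp
qed

lemma C0_ge3: assumes "is_measureN \<mu>" shows "C0 \<mu> \<ge> 3"
proof (rule ccontr)
  assume "\<not> C0 \<mu> \<ge> 3"
  hence "C0 \<mu> < 3" by simp
  then obtain c where c1: "C0 \<mu> < ereal c" and c2: "ereal c < 3" using ereal_dense2 by blast
  have "\<forall>x\<ge>1. sum \<mu> (ballN x 1) / \<mu> x \<le> c"
  proof (intro allI impI)
    fix x :: nat assume "1 \<le> x"
    hence "ereal (sum \<mu> (ballN x 1) / \<mu> x) \<le> C0 \<mu>" unfolding C0_def
      by (intro SUP_upper) auto
    hence "ereal (sum \<mu> (ballN x 1) / \<mu> x) < ereal c" using c1 by (rule le_less_trans)
    thus "sum \<mu> (ballN x 1) / \<mu> x \<le> c" by simp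
  qed
  moreover have "c < 3" using c2 by simp
  ultimately show False using key assms by blast
qed

lemma C0_le_dc: "C0 \<mu> \<le> doubling_const \<mu>"
  unfolding C0_def doubling_const_def
proof (rule SUP_least)
  fix x :: nat assume x: "x \<in> {x. 1 \<le> x}"
  have "ereal (sum \<mu> (ballN x 1) / \<mu> x) =
     ereal (sum \<mu> (ballN (fst (x, 0::nat)) (2 * snd (x, 0::nat) + 1)) / sum \<mu> (ballN (fst (x, 0::nat)) (snd (x, 0::nat))))"
    using x by (simp add: ballN0)
  also have "\<dots> \<le> (SUP p \<in> {x. 1 \<le> x} \<times> (UNIV :: nat set).
        ereal (sum \<mu> (ballN (fst p) (2 * snd p + 1)) / sum \<mu> (ballN (fst p) (snd p))))"
    using x by (intro SUP_upper) auto
  finally show "ereal (sum \<mu> (ballN x 1) / \<mu> x) \<le> \<dots>" .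
qed

lemma one_dc: "doubling_const (\<lambda>_. 1) \<le> 3"
  unfolding doubling_const_def
proof (rule SUP_least)
  fix p :: "nat \<times> nat" assume "p \<in> {x. 1 \<le> x} \<times> UNIV"
  then obtain x k where p: "p = (x, k)" and x: "1 \<le> x" by auto
  have ineq: "card (ballN x (2 * k + 1)) \<le> 3 * card (ballN x k)"
    unfolding card_ballN using x by (simp add: max_def split: if_splits) arith
  have pos: "card (ballN x k) > 0" unfolding card_ballN using x by (simp add: max_def) arith
  have "real (card (ballN x (2 * k + 1))) / real (card (ballN x k)) \<le> 3"
    using ineq pos by (simp add: divide_le_eq)
  thus "ereal (sum (\<lambda>_. 1) (ballN (fst p) (2 * snd p + 1)) / sum (\<lambda>_. 1) (ballN (fst p) (snd p))) \<le> 3"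
  proof -
    have e: "\<And>A. sum (\<lambda>_. 1::real) A = real (card A)" by simp
    show ?thesis unfolding p fst_conv snd_conv e using \<open>real (card (ballN x (2 * k + 1))) / real (card (ballN x k)) \<le> 3\<close>
      by (metis ereal_less_eq(3) numeral_eq_ereal)
  qed
qed

lemma one_doubling: "doublingN (\<lambda>_. 1)"
proof -
  have "(3::ereal) < \<infinity>" by simp
  hence "doubling_const (\<lambda>_. 1) < \<infinity>" using one_dc by (meson le_less_trans)
  thus ?thesis unfolding doublingN_def is_measureN_def by simp
qed

theorem theorem4p3:
  shows "C_N = 3 \<and> C0_N = 3"
proof
  show "C_N = 3"
  proof (rule antisym)
    show "C_N \<le> 3" unfolding C_N_def using one_doubling one_dc
      by (meson INF_lower2 mem_Collect_eq)
    show "3 \<le> C_N" unfolding C_N_def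
    proof (rule INF_greatest)
      fix \<mu> assume "\<mu> \<in> {\<mu>. doublingN \<mu>}"
      hence "is_measureN \<mu>" by (simp add: doublingN_def)
      hence "3 \<le> C0 \<mu>" by (rule C0_ge3)
      also have "\<dots> \<le> doubling_const \<mu>" by (rule C0_le_dc)
      finally show "3 \<le> doubling_const \<mu>" .
    qed
  qed
  show "C0_N = 3"
  proof (rule antisym)
    have "C0 (\<lambda>_. 1) \<le> 3" using C0_le_dc[of "\<lambda>_. 1"] one_dc by (rule order_trans)
    thus "C0_N \<le> 3" unfolding C0_N_def using one_doubling
      by (meson INF_lower2 mem_Collect_eq)
    show "3 \<le> C0_N" unfolding C0_N_def
      by (rule INF_greatest) (use C0_ge3 doublingN_def in auto)
  qed
qed

end
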